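(* Let $\mathfrak X=(\mathbb R^d,d_{\rm e},\mu)$, $d\in\mathbb N$, where $d_{\rm e}$ is the Euclidean metric and $\mu$ is a Borel measure with $\mu(B)\in(0,\infty)$ for every open ball $B$. Assume that $\limsup_{r\to\infty}\frac{\mu(B_{r+1}(y_0))}{\mu(B_r(y_0))}<\infty$ for some $y_0\in\mathbb R^d$. Then the centered maximal operator $\mathcal M^{\rm c}_{\mathfrak X}$ possesses the dichotomy property.
   Context: $B_r(x)$ is the open Euclidean ball of center $x$ and radius $r$. $L^1_{\rm loc}(\mu)$: functions integrable on every open ball. $\mathcal M^{\rm c}f(x)=\sup_{r>0}\mu(B_r(x))^{-1}\int_{B_r(x)}|f|d\mu$. $\mathcal M^{\rm c}$ possesses the dichotomy property if for every $f\in L^1_{\rm loc}(\mu)$ either $\mu(\{\mathcal M^{\rm c}f=\infty\})=0$ or $\mathcal M^{\rm c}f(x)=\infty$ for all $x$. *)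

theory Defs
  imports "HOL-Analysis.Analysis"
begin

definition L1_loc :: "'a::metric_space measure \<Rightarrow> ('a \<Rightarrow> real) set" where
  "L1_loc M = {f. f \<in> borel_measurable M \<and>
      (\<forall>x r. (\<integral>\<^sup>+ y\<in>ball x r. ennreal \<bar>f y\<bar> \<partial>M) < \<infinity>)}"

definition centered_max :: "'a::metric_space measure \<Rightarrow> ('a \<Rightarrow> real) \<Rightarrow> 'a \<Rightarrow> ennreal" where
  "centered_max M f x =
     (SUP r\<in>{0<..}. (\<integral>\<^sup>+ y\<in>ball x r. ennreal \<bar>f y\<bar> \<partial>M) / emeasure M (ball x r))"

definition dichotomy_centered :: "'a::metric_space measure \<Rightarrow> bool" where
  "dichotomy_centered M \<longleftrightarrow>
     (\<forall>f\<in>L1_loc M. emeasure M {x. centered_max M f x = \<infinity>} = 0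
                    \<or> (\<forall>x. centered_max M f x = \<infinity>))"

end

theory Submission
  imports Defs
begin


lemma net_exists:
  fixes K :: "'a::metric_space set"
  assumes "compact K" "e > 0"
  shows "\<exists>T. finite T \<and> K \<subseteq> (\<Union>t\<in>T. ball t e)"
  using assms compact_eq_totally_bounded by blast

lemma sep_card_bound:
  fixes A :: "'a::euclidean_space set"
  assumes "bounded A" "d > 0"
  shows "\<exists>b::nat. \<forall>P. finite P \<and> P \<subseteq> A \<and> (\<forall>x\<in>P. \<forall>y\<in>P. x \<noteq> y \<longrightarrow> d \<le> dist x y) \<longrightarrow> card P < b"
proof -
  have "compact (closure A)" using assms(1) by (simp add: compact_closure)
  then obtain T where T: "finite T" "closure A \<subseteq> (\<Union>t\<in>T. ball t (d/2))"
    using net_exists[of "closure A" "d/2"] assms(2) by auto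
  show ?thesis
  proof (intro exI allI impI)
    fix P assume P: "finite P \<and> P \<subseteq> A \<and> (\<forall>x\<in>P. \<forall>y\<in>P. x \<noteq> y \<longrightarrow> d \<le> dist x y)"
    define g where "g x = (SOME t. t \<in> T \<and> x \<in> ball t (d/2))" for x
    have g: "g x \<in> T \<and> x \<in> ball (g x) (d/2)" if "x \<in> P" for x
    proof -
      have "x \<in> closure A" using that P closure_subset by blast
      then have "\<exists>t. t \<in> T \<and> x \<in> ball t (d/2)" using T by blast
      then show ?thesis unfolding g_def by (rule someI_ex)
    qed
    have "inj_on g P"
    proof (rule inj_onI)
      fix x y assume xy: "x \<in> P" "y \<in> P" "g x = g y"
      show "x = y"
      proof (rule ccontr)
        assume "x \<noteq> y"
        then have "d \<le> dist x y" using P xy by blast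
        moreover have "dist x y < d"
        proof -
          have "dist (g x) x < d/2" "dist (g x) y < d/2" using g[OF xy(1)] g[OF xy(2)] xy(3) by auto
          then show ?thesis using dist_triangle[of x y "g x"] by (simp add: dist_commute)
        qed
        ultimately show False by simp
      qed
    qed
    then have "card P \<le> card T"
      using card_inj_on_le[of g P T] g T(1) by blast
    then show "card P < card T + 1" by simp
  qed
qed

lemma maxsep:
  fixes A :: "'a::euclidean_space set"
  assumes "bounded A" "d > 0"
  shows "\<exists>P. finite P \<and> P \<subseteq> A \<and> (\<forall>x\<in>P. \<forall>y\<in>P. x \<noteq> y \<longrightarrow> d \<le> dist x y)
             \<and> A \<subseteq> (\<Union>p\<in>P. ball p d)"
proof -
  define Q where "Q P \<longleftrightarrow> finite P \<and> P \<subseteq> A \<and> (\<forall>x\<in>P. \<forall>y\<in>P. x \<noteq> y \<longrightarrow> d \<le> dist x y)" for P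
  obtain b where b: "\<forall>P. Q P \<longrightarrow> card P < b"
    using sep_card_bound[OF assms] unfolding Q_def by blast
  have "Q {}" unfolding Q_def by simp
  then obtain P where P: "Q P" "\<forall>P'. Q P' \<longrightarrow> card P' \<le> card P"
    using ex_has_greatest_nat[of Q "{}" card b] b by blast
  have "A \<subseteq> (\<Union>p\<in>P. ball p d)"
  proof
    fix a assume a: "a \<in> A"
    show "a \<in> (\<Union>p\<in>P. ball p d)"
    proof (rule ccontr)
      assume na: "a \<notin> (\<Union>p\<in>P. ball p d)"
      then have "a \<notin> P" using assms(2) by force
      have "Q (insert a P)" using P(1) a na unfolding Q_def
        by (auto simp: dist_commute not_less)
      then have "card (insert a P) \<le> card P" using P(2) by blast
      moreover have "card (insert a P) = Suc (card P)" using \<open>a \<notin> P\<close> P(1) unfolding Q_def by simp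
      ultimately show False by simp
    qed
  qed
  then show ?thesis using P(1) unfolding Q_def by blast
qed

lemma cover_finite_radii:
  fixes A :: "'a::euclidean_space set"
  assumes "finite V" "\<forall>v\<in>V. v > 0"
  shows "bounded A \<Longrightarrow> (\<forall>x\<in>A. \<rho> x \<in> V) \<Longrightarrow>
    \<exists>S. finite S \<and> S \<subseteq> A \<and> A \<subseteq> (\<Union>x\<in>S. ball x (\<rho> x))
        \<and> (\<forall>x\<in>S. \<forall>y\<in>S. x \<noteq> y \<longrightarrow> \<rho> x \<le> dist x y)"
  using assms
proof (induction V arbitrary: A rule: finite_remove_induct)
  case empty
  then show ?case by (intro exI[of _ "{}"]) auto
next
  case (remove V A)
  define v where "v = Max V"
  have vV: "v \<in> V" using Max_in[OF remove.hyps(1,2)] v_def by simp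
  have vmax: "\<And>w. w \<in> V \<Longrightarrow> w \<le> v" using Max_ge[OF remove.hyps(1)] v_def by simp
  define Av where "Av = {x\<in>A. \<rho> x = v}"
  have "bounded Av" by (rule bounded_subset[OF remove.prems(1)]) (auto simp: Av_def)
  then obtain P where P: "finite P" "P \<subseteq> Av" "\<forall>x\<in>P. \<forall>y\<in>P. x \<noteq> y \<longrightarrow> v \<le> dist x y"
      "Av \<subseteq> (\<Union>p\<in>P. ball p v)"
  proof -
    have "v > 0" using vV remove.prems(3) by blast
    from maxsep[OF \<open>bounded Av\<close> this] show ?thesis using that by blast
  qed
  define A' where "A' = A - (\<Union>p\<in>P. ball p v)"
  have bA': "bounded A'" by (rule bounded_subset[OF remove.prems(1)]) (auto simp: A'_def)
  have rA': "\<forall>x\<in>A'. \<rho> x \<in> V - {v}"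
  proof
    fix x assume x: "x \<in> A'"
    then have xA: "x \<in> A" and xn: "x \<notin> (\<Union>p\<in>P. ball p v)" unfolding A'_def by auto
    have "\<rho> x \<noteq> v"
    proof
      assume "\<rho> x = v" then have "x \<in> Av" using xA unfolding Av_def by simp
      then show False using P(4) xn by (meson subsetD)
    qed
    then show "\<rho> x \<in> V - {v}" using remove.prems(2) xA by simp
  qed
  have pV: "\<forall>w\<in>V - {v}. w > 0" using remove.prems(3) by auto
  obtain S' where S': "finite S'" "S' \<subseteq> A'" "A' \<subseteq> (\<Union>x\<in>S'. ball x (\<rho> x))"
      "\<forall>x\<in>S'. \<forall>y\<in>S'. x \<noteq> y \<longrightarrow> \<rho> x \<le> dist x y"
    using remove.IH[OF vV bA' rA' pV] by blast
  have Pv: "\<And>p. p \<in> P \<Longrightarrow> \<rho> p = v" using P(2) unfolding Av_def by blast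
  have S'le: "\<And>x. x \<in> S' \<Longrightarrow> \<rho> x \<le> v"
  proof -
    fix x assume "x \<in> S'" then have "x \<in> A" using S'(2) unfolding A'_def by auto
    then show "\<rho> x \<le> v" using remove.prems(2) vmax by simp
  qed
  have S'far: "\<And>x p. x \<in> S' \<Longrightarrow> p \<in> P \<Longrightarrow> v \<le> dist p x" using S'(2) unfolding A'_def
    by (auto simp: not_less)
  show ?case
  proof (intro exI[of _ "P \<union> S'"] conjI)
    show "finite (P \<union> S')" using P(1) S'(1) by simp
    show "P \<union> S' \<subseteq> A" using P(2) S'(2) unfolding Av_def A'_def by blast
    show "A \<subseteq> (\<Union>x\<in>P \<union> S'. ball x (\<rho> x))"
    proof
      fix x assume "x \<in> A"
      show "x \<in> (\<Union>x\<in>P \<union> S'. ball x (\<rho> x))"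
      proof (cases "x \<in> (\<Union>p\<in>P. ball p v)")
        case True then show ?thesis using Pv by auto
      next
        case False then have "x \<in> A'" using \<open>x \<in> A\<close> unfolding A'_def by blast
        then show ?thesis using S'(3) by blast
      qed
    qed
    show "\<forall>x\<in>P \<union> S'. \<forall>y\<in>P \<union> S'. x \<noteq> y \<longrightarrow> \<rho> x \<le> dist x y"
    proof (intro ballI impI)
      fix x y assume xy: "x \<in> P \<union> S'" "y \<in> P \<union> S'" "x \<noteq> y"
      show "\<rho> x \<le> dist x y"
      proof (cases "x \<in> P")
        case True
        show ?thesis
        proof (cases "y \<in> P")
          case True then show ?thesis using \<open>x \<in> P\<close> P(3) Pv xy(3) by auto
        next
          case False then have "y \<in> S'" using xy by blast
          then show ?thesis using S'far[OF _ \<open>x \<in> P\<close>] Pv[OF \<open>x \<in> P\<close>] by auto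
        qed
      next
        case False then have xS: "x \<in> S'" using xy by blast
        show ?thesis
        proof (cases "y \<in> P")
          case True then show ?thesis using S'far[OF xS True] S'le[OF xS] by (simp add: dist_commute)
        next
          case False then have "y \<in> S'" using xy by blast
          then show ?thesis using S'(4) xS xy(3) by blast
        qed
      qed
    qed
  qed
qed



lemma angle_sep:
  fixes a b :: "'a::real_inner"
  assumes "a \<noteq> 0" "b \<noteq> 0" "norm a < norm (a - b)" "norm b < norm (a - b)"
  shows "1 < dist (sgn a) (sgn b)"
proof -
  have e1: "(norm (a-b))^2 = (norm a)^2 + (norm b)^2 - 2 * inner a b"
    by (simp add: power2_norm_eq_inner inner_diff inner_commute)
  have "(norm b)^2 < (norm (a-b))^2" using assms(4) by (simp add: power_strict_mono)
  then have h1: "2 * inner a b < (norm a)^2" using e1 by simp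
  have "(norm a)^2 < (norm (a-b))^2" using assms(3) by (simp add: power_strict_mono)
  then have h2: "2 * inner a b < (norm b)^2" using e1 by simp
  have h3: "2 * inner a b < norm a * norm b"
  proof (cases "norm a \<le> norm b")
    case True
    then have "(norm a)^2 \<le> norm a * norm b" by (simp add: power2_eq_square mult_left_mono)
    then show ?thesis using h1 by simp
  next
    case False
    then have "(norm b)^2 \<le> norm a * norm b" by (simp add: power2_eq_square mult_right_mono)
    then show ?thesis using h2 by simp
  qed
  have pa: "norm a > 0" "norm b > 0" using assms by auto
  have "inner (sgn a) (sgn b) = inner a b / (norm a * norm b)"
    by (simp add: sgn_div_norm inner_scaleR_left inner_scaleR_right divide_inverse mult.commute mult.left_commute)
  also have "\<dots> < 1/2" using h3 pa by (simp add: field_simps)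
  finally have ip: "inner (sgn a) (sgn b) < 1/2" .
  have "(dist (sgn a) (sgn b))^2 = (norm (sgn a))^2 + (norm (sgn b))^2 - 2 * inner (sgn a) (sgn b)"
    by (simp add: dist_norm power2_norm_eq_inner inner_diff inner_commute)
  also have "\<dots> = 2 - 2 * inner (sgn a) (sgn b)" using assms by (simp add: norm_sgn)
  finally have "(dist (sgn a) (sgn b))^2 > 1" using ip by simp
  then show ?thesis
    by (smt (verit) zero_le_dist one_power2 power_mono)
qed

lemma overlap_bound:
  "\<exists>N::nat. \<forall>(S::'a::euclidean_space set) \<rho> z. finite S \<longrightarrow>
      (\<forall>x\<in>S. \<forall>y\<in>S. x \<noteq> y \<longrightarrow> \<rho> x \<le> dist x y) \<longrightarrow>
      card {x\<in>S. dist x z < \<rho> x} \<le> N"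
proof -
  obtain T :: "'a set" where T: "finite T" "sphere 0 1 \<subseteq> (\<Union>t\<in>T. ball t (1/2))"
    using net_exists[of "sphere (0::'a) 1" "1/2"] by auto
  show ?thesis
  proof (intro exI[of _ "card T + 1"] allI impI)
    fix S :: "'a set" and \<rho> z
    assume fS: "finite S" and sep: "\<forall>x\<in>S. \<forall>y\<in>S. x \<noteq> y \<longrightarrow> \<rho> x \<le> dist x y"
    define Q where "Q = {x\<in>S. dist x z < \<rho> x}"
    define g where "g x = (SOME t. t \<in> T \<and> sgn (x - z) \<in> ball t (1/2))" for x
    have g: "g x \<in> T \<and> sgn (x - z) \<in> ball (g x) (1/2)" if "x \<noteq> z" for x
    proof -
      have "sgn (x - z) \<in> sphere 0 1" using that by (simp add: norm_sgn)
      then have "\<exists>t. t \<in> T \<and> sgn (x - z) \<in> ball t (1/2)" using T by blast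
      then show ?thesis unfolding g_def by (rule someI_ex)
    qed
    have "inj_on g (Q - {z})"
    proof (rule inj_onI)
      fix x y assume xy: "x \<in> Q - {z}" "y \<in> Q - {z}" "g x = g y"
      show "x = y"
      proof (rule ccontr)
        assume ne: "x \<noteq> y"
        have xS: "x \<in> S" "y \<in> S" and dx: "dist x z < \<rho> x" and dy: "dist y z < \<rho> y"
          using xy unfolding Q_def by auto
        have "\<rho> x \<le> dist x y" "\<rho> y \<le> dist y x" using sep xS ne by auto
        then have "norm (x - z) < norm ((x - z) - (y - z))" "norm (y - z) < norm ((x - z) - (y - z))"
          using dx dy by (auto simp: dist_norm norm_minus_commute)
        then have "1 < dist (sgn (x - z)) (sgn (y - z))"
          using xy by (intro angle_sep) auto
        moreover have "dist (sgn (x - z)) (sgn (y - z)) < 1"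
        proof -
          have "dist (g x) (sgn (x - z)) < 1/2" "dist (g x) (sgn (y - z)) < 1/2"
            using g[of x] g[of y] xy by auto
          then show ?thesis using dist_triangle[of "sgn (x - z)" "sgn (y - z)" "g x"]
            by (simp add: dist_commute)
        qed
        ultimately show False by simp
      qed
    qed
    moreover have "g ` (Q - {z}) \<subseteq> T" using g by auto
    ultimately have "card (Q - {z}) \<le> card T" using card_inj_on_le T(1) by blast
    moreover have "card Q \<le> card (Q - {z}) + 1"
    proof -
      have fQ: "finite Q" using fS unfolding Q_def by simp
      show ?thesis
      proof (cases "z \<in> Q")
        case True
        then have "card Q > 0" using fQ card_gt_0_iff by blast
        then show ?thesis using card_Diff_singleton[OF True] by simp
      next
        case False then show ?thesis by simp
      qed
    qed
    ultimately show "card {x\<in>S. dist x z < \<rho> x} \<le> card T + 1" unfolding Q_def by linarith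
  qed
qed



lemma pointwise_overlap:
  fixes S :: "'a::euclidean_space set"
  assumes fS: "finite S" and Nb: "card {x\<in>S. dist x z < \<rho> x} \<le> N"
    and Sb: "S \<subseteq> ball c R" and rb: "\<forall>x\<in>S. \<rho> x \<le> 1"
  shows "(\<Sum>x\<in>S. indicator (ball x (\<rho> x)) z :: ennreal) \<le> of_nat N * indicator (ball c (R+1)) z"
proof -
  have eq: "(\<Sum>x\<in>S. indicator (ball x (\<rho> x)) z :: ennreal) = (\<Sum>x\<in>S. indicator {x\<in>S. dist x z < \<rho> x} x)"
    by (rule sum.cong) (auto simp: indicator_def)
  also have "\<dots> = of_nat (card (S \<inter> {x\<in>S. dist x z < \<rho> x}))"
    unfolding indicator_def using fS by (simp add: sum.If_cases) (metis Collect_conj_eq Int_assoc Int_absorb Collect_mem_eq)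
  also have "S \<inter> {x\<in>S. dist x z < \<rho> x} = {x\<in>S. dist x z < \<rho> x}" by blast
  finally have e2: "(\<Sum>x\<in>S. indicator (ball x (\<rho> x)) z :: ennreal) = of_nat (card {x\<in>S. dist x z < \<rho> x})" .
  show ?thesis
  proof (cases "z \<in> ball c (R+1)")
    case True
    then show ?thesis using e2 Nb by (simp add: of_nat_mono)
  next
    case False
    have "{x\<in>S. dist x z < \<rho> x} = {}"
    proof (rule ccontr)
      assume "{x\<in>S. dist x z < \<rho> x} \<noteq> {}"
      then obtain x where "x \<in> S" "dist x z < \<rho> x" by blast
      then have "dist c x < R" "dist x z < 1" using Sb rb by force+
      then have "dist c z < R + 1" using dist_triangle[of c z x] by simp
      then show False using False by simp
    qed
    then show ?thesis using e2 False by simp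
  qed
qed

lemma covering_estimate:
  fixes M nu :: "'a::euclidean_space measure"
  assumes sM: "sets M = sets borel" and sN: "sets nu = sets borel"
    and fS: "finite S"
    and Nb: "\<forall>z. card {x\<in>S. dist x z < \<rho> x} \<le> N"
    and Sb: "S \<subseteq> ball c R" and rb: "\<forall>x\<in>S. \<rho> x \<le> 1"
    and good: "\<forall>x\<in>S. of_nat K * emeasure M (ball x (\<rho> x)) < emeasure nu (ball x (\<rho> x))"
  shows "of_nat K * emeasure M (\<Union>x\<in>S. ball x (\<rho> x)) \<le> of_nat N * emeasure nu (ball c (R+1))"
proof -
  have bM: "ball x r \<in> sets M" for x r using sM by simp
  have bN: "ball x r \<in> sets nu" for x r using sN by simp
  have "of_nat K * emeasure M (\<Union>x\<in>S. ball x (\<rho> x)) \<le> of_nat K * (\<Sum>x\<in>S. emeasure M (ball x (\<rho> x)))"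
    by (intro mult_left_mono emeasure_subadditive_finite fS) (auto simp: bM)
  also have "\<dots> = (\<Sum>x\<in>S. of_nat K * emeasure M (ball x (\<rho> x)))" by (simp add: sum_distrib_left)
  also have "\<dots> \<le> (\<Sum>x\<in>S. emeasure nu (ball x (\<rho> x)))"
    by (intro sum_mono less_imp_le) (use good in blast)
  also have "\<dots> = (\<Sum>x\<in>S. \<integral>\<^sup>+ z. indicator (ball x (\<rho> x)) z \<partial>nu)"
    by (simp add: bN)
  also have "\<dots> = (\<integral>\<^sup>+ z. (\<Sum>x\<in>S. indicator (ball x (\<rho> x)) z) \<partial>nu)"
    by (rule nn_integral_sum[symmetric]) (auto simp: measurable_cong_sets[OF sN refl] intro!: borel_measurable_indicator)
  also have "\<dots> \<le> (\<integral>\<^sup>+ z. of_nat N * indicator (ball c (R+1)) z \<partial>nu)"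
    by (intro nn_integral_mono pointwise_overlap fS Sb) (use Nb rb in auto)
  also have "\<dots> = of_nat N * emeasure nu (ball c (R+1))"
    by (simp add: bN nn_integral_cmult_indicator)
  finally show ?thesis .
qed



lemma ennreal_zero_of_bound:
  fixes x C :: ennreal
  assumes h: "\<And>K::nat. K \<ge> 1 \<Longrightarrow> of_nat K * x \<le> C" and C: "C < top"
  shows "x = 0"
proof (rule ccontr)
  assume x0: "x \<noteq> 0"
  obtain c where c: "C = ennreal c" "c \<ge> 0" using C by (cases C) auto
  show False
  proof (cases "x = top")
    case True
    then have "top \<le> C" using h[of 1] by simp
    then show False using C by simp
  next
    case False
    then obtain t where t: "x = ennreal t" "t \<ge> 0" by (cases x) auto
    with x0 have tp: "t > 0" by auto
    obtain K :: nat where K: "real K > c / t" using reals_Archimedean2 by blast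
    have "c / t \<ge> 0" using tp c(2) by simp
    then have "K \<ge> 1" using K by (cases K) auto
    have "ennreal (real K * t) \<le> ennreal c" using h[OF \<open>K \<ge> 1\<close>] t c
      by (simp add: ennreal_mult ennreal_of_nat_eq_real_of_nat)
    then have "real K * t \<le> c" using c(2) by (simp add: ennreal_le_iff)
    moreover have "c < real K * t" using K tp by (simp add: field_simps)
    ultimately show False by simp
  qed
qed

lemma left_cont_good:
  fixes M nu :: "'a::euclidean_space measure"
  assumes sM: "sets M = sets borel" and sN: "sets nu = sets borel"
    and r: "0 < r" and g: "of_nat K * emeasure M (ball x r) < emeasure nu (ball x r)"
  shows "\<exists>r'. 0 < r' \<and> r' < r \<and> (\<forall>s. r' \<le> s \<and> s \<le> r \<longrightarrow>
            of_nat K * emeasure M (ball x s) < emeasure nu (ball x s))"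
proof -
  define b where "b n = ball x (r - r / real (n+2))" for n :: nat
  have inc: "incseq b"
  proof (rule incseq_SucI)
    fix n
    have "r / real (Suc n + 2) \<le> r / real (n + 2)" using r by (intro divide_left_mono) auto
    then show "b n \<subseteq> b (Suc n)" unfolding b_def by (intro subset_ball) linarith
  qed
  have un: "(\<Union>n. b n) = ball x r"
  proof
    have "b n \<subseteq> ball x r" for n
    proof -
      have "r / real (n+2) \<ge> 0" using r by simp
      then show ?thesis unfolding b_def by (intro subset_ball) linarith
    qed
    then show "(\<Union>n. b n) \<subseteq> ball x r" by blast
    show "ball x r \<subseteq> (\<Union>n. b n)"
    proof
      fix y assume "y \<in> ball x r"
      then have d: "dist x y < r" by simp
      obtain n :: nat where n: "real n > r / (r - dist x y)" using reals_Archimedean2 by blast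
      have "r / real (n+2) < r - dist x y"
      proof -
        have pos: "r - dist x y > 0" using d by simp
        have "r < (r - dist x y) * real n" using n pos by (simp add: field_simps)
        also have "\<dots> \<le> (r - dist x y) * real (n+2)" using pos by (intro mult_left_mono) auto
        finally show ?thesis by (simp add: field_simps)
      qed
      then have "y \<in> b n" unfolding b_def using d by simp
      then show "y \<in> (\<Union>n. b n)" by blast
    qed
  qed
  have rb: "range b \<subseteq> sets nu" by (auto simp: sN b_def)
  have "(SUP n. emeasure nu (b n)) = emeasure nu (\<Union>n. b n)"
    by (rule SUP_emeasure_incseq[OF rb inc])
  then have "of_nat K * emeasure M (ball x r) < (SUP n. emeasure nu (b n))" using g un by simp
  then obtain n where n: "of_nat K * emeasure M (ball x r) < emeasure nu (b n)"
    by (auto simp: less_SUP_iff)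
  define r' where "r' = r - r / real (n+2)"
  have "r / real (n+2) < r / 1" using r by (intro divide_strict_left_mono) auto
  then have "r / real (n+2) < r" by simp
  moreover have "r / real (n+2) > 0" using r by simp
  ultimately have r': "0 < r'" "r' < r" unfolding r'_def by linarith+
  show ?thesis
  proof (intro exI[of _ r'] conjI allI impI r')
    fix s assume s: "r' \<le> s \<and> s \<le> r"
    have "of_nat K * emeasure M (ball x s) \<le> of_nat K * emeasure M (ball x r)"
      using s by (intro mult_left_mono emeasure_mono) (auto simp: sM subset_ball)
    also have "\<dots> < emeasure nu (b n)" by (fact n)
    also have "\<dots> \<le> emeasure nu (ball x s)"
      using s unfolding b_def r'_def[symmetric] by (intro emeasure_mono) (auto simp: sN subset_ball)
    finally show "of_nat K * emeasure M (ball x s) < emeasure nu (ball x s)" .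
  qed
qed

lemma grid_point:
  assumes "0 < r'" "r' < r" "r \<le> 1"
  shows "\<exists>m0. \<forall>m\<ge>m0. \<exists>s\<in>(\<lambda>k. real k / real (Suc m)) ` {1..Suc m}. r' \<le> s \<and> s \<le> r"
proof -
  obtain m0 :: nat where m0: "real m0 > 1 / (r - r')" using reals_Archimedean2 by blast
  show ?thesis
  proof (intro exI[of _ m0] allI impI)
    fix m assume "m0 \<le> m"
    define q where "q = real (Suc m)"
    have q: "q > 0" "q > 1 / (r - r')" using m0 \<open>m0 \<le> m\<close> unfolding q_def by auto
    then have q1: "1 / q < r - r'" using assms by (simp add: field_simps)
    define k where "k = nat \<lceil>r' * q\<rceil>"
    have "r' * q > 0" using assms q by simp
    then have kk: "real k = of_int \<lceil>r' * q\<rceil>" unfolding k_def by simp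
    have k1: "real k \<ge> r' * q" using kk ceiling_correct[of "r' * q"] by linarith
    have k2: "real k < r' * q + 1" using kk ceiling_correct[of "r' * q"] by linarith
    have "real k > 0" using k1 \<open>r' * q > 0\<close> by linarith
    then have "k \<ge> 1" by simp
    have s1: "r' \<le> real k / q" using k1 q by (simp add: field_simps)
    have "real k / q < r' + 1/q" using k2 q by (simp add: field_simps)
    then have s2: "real k / q < r" using q1 by simp
    then have "real k < q * r" using q by (simp add: field_simps)
    moreover have "q * r \<le> q" using q assms by (simp add: mult_left_le)
    ultimately have "real k < q" by linarith
    then have "k \<le> Suc m" unfolding q_def by simp
    then show "\<exists>s\<in>(\<lambda>k. real k / real (Suc m)) ` {1..Suc m}. r' \<le> s \<and> s \<le> r"
      using \<open>k \<ge> 1\<close> s1 s2 unfolding q_def by (intro bexI[of _ "real k / real (Suc m)"]) auto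
  qed
qed



lemma null_superset:
  fixes M nu :: "'a::euclidean_space measure"
  assumes sM: "sets M = sets borel" and sN: "sets nu = sets borel"
    and finN: "\<And>x r. emeasure nu (ball x r) < \<infinity>"
    and hyp: "\<And>x K. x \<in> Z \<Longrightarrow> \<exists>r. 0 < r \<and> r < 1 \<and>
                 of_nat K * emeasure M (ball x r) < emeasure nu (ball x r)"
  shows "\<exists>W. W \<in> null_sets M \<and> Z \<subseteq> W"
proof -
  obtain N :: nat where N: "\<And>(S::'a set) \<rho> z. finite S \<Longrightarrow>
      (\<forall>x\<in>S. \<forall>y\<in>S. x \<noteq> y \<longrightarrow> \<rho> x \<le> dist x y) \<Longrightarrow> card {x\<in>S. dist x z < \<rho> x} \<le> N"
    using overlap_bound by blast
  define good where "good K x s \<longleftrightarrow> of_nat K * emeasure M (ball x s) < emeasure nu (ball x s)"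
    for K :: nat and x :: 'a and s :: real
  define Gr where "Gr m = (\<lambda>k. real k / real (Suc m)) ` {1..Suc m}" for m :: nat
  define Aset where "Aset R K m = {x \<in> ball 0 (real R). \<exists>s\<in>Gr m. good K x s}" for R K m
  define C where "C R = of_nat N * emeasure nu (ball 0 (real R + 1))" for R :: nat
  have bM: "ball x r \<in> sets M" for x r using sM by simp
  have exU: "\<exists>U. U \<in> sets M \<and> Aset R K m \<subseteq> U \<and> of_nat K * emeasure M U \<le> C R" for R K m
  proof -
    define \<rho> where "\<rho> x = (SOME s. s \<in> Gr m \<and> good K x s)" for x
    have \<rho>: "\<rho> x \<in> Gr m \<and> good K x (\<rho> x)" if "x \<in> Aset R K m" for x
    proof -
      have "\<exists>s. s \<in> Gr m \<and> good K x s" using that unfolding Aset_def by blast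
      then show ?thesis unfolding \<rho>_def by (rule someI_ex)
    qed
    have fG: "finite (Gr m)" unfolding Gr_def by simp
    have pG: "\<forall>v\<in>Gr m. v > 0" unfolding Gr_def by auto
    have G1: "\<forall>v\<in>Gr m. v \<le> 1" unfolding Gr_def by auto
    have bA: "bounded (Aset R K m)" unfolding Aset_def by (rule bounded_subset[OF bounded_ball[of 0 "real R"]]) auto
    have \<rho>G: "\<forall>x\<in>Aset R K m. \<rho> x \<in> Gr m" using \<rho> by simp
    obtain S where S: "finite S" "S \<subseteq> Aset R K m" "Aset R K m \<subseteq> (\<Union>x\<in>S. ball x (\<rho> x))"
        "\<forall>x\<in>S. \<forall>y\<in>S. x \<noteq> y \<longrightarrow> \<rho> x \<le> dist x y"
      using cover_finite_radii[OF fG pG bA \<rho>G] by blast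
    have "of_nat K * emeasure M (\<Union>x\<in>S. ball x (\<rho> x)) \<le> of_nat N * emeasure nu (ball 0 (real R + 1))"
    proof (rule covering_estimate[OF sM sN S(1)])
      show "\<forall>z. card {x\<in>S. dist x z < \<rho> x} \<le> N" using N[OF S(1) S(4)] by blast
      show "S \<subseteq> ball 0 (real R)" using S(2) unfolding Aset_def by blast
      show "\<forall>x\<in>S. \<rho> x \<le> 1"
      proof
        fix x assume "x \<in> S" then have "x \<in> Aset R K m" using S(2) by blast
        then show "\<rho> x \<le> 1" using \<rho> G1 by simp
      qed
      show "\<forall>x\<in>S. of_nat K * emeasure M (ball x (\<rho> x)) < emeasure nu (ball x (\<rho> x))"
      proof
        fix x assume "x \<in> S" then have "x \<in> Aset R K m" using S(2) by blast
        then show "of_nat K * emeasure M (ball x (\<rho> x)) < emeasure nu (ball x (\<rho> x))"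
          using \<rho> unfolding good_def by simp
      qed
    qed
    moreover have "(\<Union>x\<in>S. ball x (\<rho> x)) \<in> sets M" using S(1) by (auto simp: bM)
    ultimately show ?thesis using S(3) unfolding C_def by blast
  qed
  define U where "U R K m = (SOME U. U \<in> sets M \<and> Aset R K m \<subseteq> U \<and> of_nat K * emeasure M U \<le> C R)" for R K m
  have Uall: "U R K m \<in> sets M \<and> Aset R K m \<subseteq> U R K m \<and> of_nat K * emeasure M (U R K m) \<le> C R" for R K m
    unfolding U_def by (rule someI_ex[OF exU])
  have U: "\<And>R K m. U R K m \<in> sets M" "\<And>R K m. Aset R K m \<subseteq> U R K m"
      "\<And>R K m. of_nat K * emeasure M (U R K m) \<le> C R"
    using Uall by auto
  define V where "V R K m = (\<Inter>m'\<in>{m..}. U R K m')" for R K m :: nat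
  define W0 where "W0 R K = (\<Union>m. V R K m)" for R K :: nat
  define W1 where "W1 R = (\<Inter>K\<in>{1..}. W0 R K)" for R :: nat
  define W where "W = (\<Union>R. W1 R)"
  have Vm: "V R K m \<in> sets M" for R K m
    unfolding V_def by (rule sets.countable_INT) (use U(1) in auto)
  have W0m: "W0 R K \<in> sets M" for R K unfolding W0_def using Vm by auto
  have W1m: "W1 R \<in> sets M" for R
    unfolding W1_def by (rule sets.countable_INT) (use W0m in auto)
  have CR: "C R < top" for R using finN[of 0 "real R + 1"] unfolding C_def
    by (simp add: ennreal_mult_less_top of_nat_less_top)
  have W0b: "of_nat K * emeasure M (W0 R K) \<le> C R" for R K
  proof -
    have inc: "incseq (V R K)" unfolding V_def incseq_def by auto
    have "emeasure M (W0 R K) = (SUP m. emeasure M (V R K m))"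
      unfolding W0_def by (rule SUP_emeasure_incseq[symmetric]) (use Vm inc in auto)
    then have "of_nat K * emeasure M (W0 R K) = (SUP m. of_nat K * emeasure M (V R K m))"
      by (simp add: SUP_mult_left_ennreal)
    also have "\<dots> \<le> C R"
    proof (rule SUP_least)
      fix m
      have "V R K m \<subseteq> U R K m" unfolding V_def by auto
      then have "emeasure M (V R K m) \<le> emeasure M (U R K m)" using U(1) by (rule emeasure_mono)
      then have "of_nat K * emeasure M (V R K m) \<le> of_nat K * emeasure M (U R K m)"
        by (rule mult_left_mono) simp
      then show "of_nat K * emeasure M (V R K m) \<le> C R" using U(3) order_trans by blast
    qed
    finally show ?thesis .
  qed
  have W1z: "emeasure M (W1 R) = 0" for R
  proof (rule ennreal_zero_of_bound[OF _ CR])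
    fix K :: nat assume "K \<ge> 1"
    have "W1 R \<subseteq> W0 R K" unfolding W1_def using \<open>K \<ge> 1\<close> by auto
    then have "emeasure M (W1 R) \<le> emeasure M (W0 R K)" using W0m by (rule emeasure_mono)
    then have "of_nat K * emeasure M (W1 R) \<le> of_nat K * emeasure M (W0 R K)"
      by (rule mult_left_mono) simp
    then show "of_nat K * emeasure M (W1 R) \<le> C R" using W0b order_trans by blast
  qed
  have "W \<in> null_sets M" unfolding W_def using W1m W1z by auto
  moreover have "Z \<subseteq> W"
  proof
    fix x assume xZ: "x \<in> Z"
    define R where "R = nat \<lceil>norm x\<rceil> + 1"
    have xR: "x \<in> ball 0 (real R)" unfolding R_def by (simp; linarith)
    have "x \<in> W0 R K" for K
    proof -
      obtain r where r: "0 < r" "r < 1" "good K x r" using hyp[OF xZ, of K] unfolding good_def by blast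
      obtain r' where r': "0 < r'" "r' < r" "\<And>s. r' \<le> s \<Longrightarrow> s \<le> r \<Longrightarrow> good K x s"
        using left_cont_good[OF sM sN r(1) r(3)[unfolded good_def]] unfolding good_def by blast
      obtain m0 where m0: "\<And>m. m \<ge> m0 \<Longrightarrow> \<exists>s\<in>Gr m. r' \<le> s \<and> s \<le> r"
        using grid_point[OF r'(1,2)] r(2) unfolding Gr_def by fastforce
      have "x \<in> U R K m" if mm: "m \<ge> m0" for m
      proof -
        obtain s where "s \<in> Gr m" "r' \<le> s" "s \<le> r" using m0[OF mm] by blast
        then have "x \<in> Aset R K m" unfolding Aset_def using xR r'(3) by blast
        then show ?thesis using U(2) by blast
      qed
      then have "x \<in> V R K m0" unfolding V_def by blast
      then show ?thesis unfolding W0_def by blast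
    qed
    then have "x \<in> W1 R" unfolding W1_def by blast
    then show "x \<in> W" unfolding W_def by blast
  qed
  ultimately show ?thesis by blast
qed



lemma growth_iter:
  fixes M :: "'a::euclidean_space measure" and y0 :: 'a
  assumes sM: "sets M = sets borel"
    and ball_pos: "\<And>x r. r > 0 \<Longrightarrow> 0 < emeasure M (ball x r)"
    and ball_fin: "\<And>x r. emeasure M (ball x r) < \<infinity>"
    and growth: "Limsup (at_top :: real filter)
              (\<lambda>r. ereal (measure M (ball y0 (r + 1)) / measure M (ball y0 r))) < \<infinity>"
  shows "\<exists>c s0. c \<ge> 0 \<and> s0 > 0 \<and> (\<forall>n::nat. \<forall>s\<ge>s0.
            emeasure M (ball y0 (s + real n)) \<le> ennreal (c ^ n) * emeasure M (ball y0 s))"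
proof -
  obtain c0 :: real where c0: "Limsup (at_top :: real filter)
              (\<lambda>r. ereal (measure M (ball y0 (r + 1)) / measure M (ball y0 r))) < ereal c0"
  proof (cases "Limsup (at_top :: real filter)
              (\<lambda>r. ereal (measure M (ball y0 (r + 1)) / measure M (ball y0 r)))")
    case (real a) then show ?thesis using that[of "a + 1"] by simp
  next
    case PInf then show ?thesis using growth by simp
  next
    case MInf then show ?thesis using that[of 0] by simp
  qed
  have "eventually (\<lambda>r. ereal (measure M (ball y0 (r + 1)) / measure M (ball y0 r)) < ereal c0) at_top"
    by (rule Limsup_lessD[OF c0])
  then obtain N :: real where N: "\<And>r. r \<ge> N \<Longrightarrow> measure M (ball y0 (r + 1)) / measure M (ball y0 r) < c0"
    by (auto simp: eventually_at_top_linorder)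
  define c where "c = max c0 0"
  define s0 where "s0 = max N 1"
  have fin: "emeasure M (ball x r) = ennreal (measure M (ball x r))" for x r
    using ball_fin[of x r] by (intro emeasure_eq_ennreal_measure) simp
  have step: "emeasure M (ball y0 (s + 1)) \<le> ennreal c * emeasure M (ball y0 s)" if s: "s \<ge> s0" for s
  proof -
    have "s > 0" "s \<ge> N" using s unfolding s0_def by auto
    have "measure M (ball y0 s) > 0"
      using ball_pos[OF \<open>s > 0\<close>, of y0] fin[of y0 s] by (simp add: ennreal_less_zero_iff)
    then have "measure M (ball y0 (s + 1)) \<le> c * measure M (ball y0 s)"
      using N[OF \<open>s \<ge> N\<close>] unfolding c_def
      by (smt (verit, ccfv_SIG) divide_less_eq max.cobounded1 mult_right_mono measure_nonneg)
    then show ?thesis unfolding fin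
      by (simp add: ennreal_mult[symmetric] c_def ennreal_leI)
  qed
  have "\<forall>s\<ge>s0. emeasure M (ball y0 (s + real n)) \<le> ennreal (c ^ n) * emeasure M (ball y0 s)" for n
  proof (induction n)
    case 0 then show ?case by simp
  next
    case (Suc n)
    show ?case
    proof (intro allI impI)
      fix s assume s: "s \<ge> s0"
      have "s + real n \<ge> s0" using s by simp
      have "emeasure M (ball y0 (s + real (Suc n))) = emeasure M (ball y0 ((s + real n) + 1))"
        by (simp add: add_ac)
      also have "\<dots> \<le> ennreal c * emeasure M (ball y0 (s + real n))" by (rule step) fact
      also have "\<dots> \<le> ennreal c * (ennreal (c ^ n) * emeasure M (ball y0 s))"
        using Suc.IH s by (intro mult_left_mono) auto
      also have "\<dots> = ennreal (c ^ Suc n) * emeasure M (ball y0 s)"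
        using c_def by (simp add: ennreal_mult mult.assoc)
      finally show "emeasure M (ball y0 (s + real (Suc n))) \<le> ennreal (c ^ Suc n) * emeasure M (ball y0 s)" .
    qed
  qed
  then show ?thesis using c_def s0_def by (intro exI[of _ c] exI[of _ s0]) auto
qed



lemma large_scale:
  fixes M nu :: "'a::euclidean_space measure"
  assumes sM: "sets M = sets borel" and sN: "sets nu = sets borel"
    and ball_pos: "\<And>x r. r > 0 \<Longrightarrow> 0 < emeasure M (ball x r)"
    and ball_fin: "\<And>x r. emeasure M (ball x r) < \<infinity>"
    and finN: "\<And>x r. emeasure nu (ball x r) < \<infinity>"
    and c: "c \<ge> 0" and s0: "s0 > 0"
    and iter: "\<And>n s. s \<ge> s0 \<Longrightarrow> emeasure M (ball y0 (s + real n)) \<le> ennreal (c ^ n) * emeasure M (ball y0 s)"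
    and Lb: "\<And>r. r > 0 \<Longrightarrow> emeasure nu (ball x0 r) \<le> L * emeasure M (ball x0 r)"
    and Lt: "L < top"
  shows "\<exists>B<top. \<forall>r\<ge>1. emeasure nu (ball x r) \<le> B * emeasure M (ball x r)"
proof -
  define D where "D = dist x x0"
  define E where "E = dist x x0 + dist x0 y0"
  define n where "n = nat \<lceil>2 * E\<rceil>"
  have nE: "real n \<ge> 2 * E" unfolding n_def by linarith
  define r1 where "r1 = s0 + E + 1"
  define B1 where "B1 = L * ennreal (c ^ n)"
  define B2 where "B2 = emeasure nu (ball x r1) / emeasure M (ball x 1)"
  have bM: "ball z r \<in> sets M" for z r using sM by simp
  have bN: "ball z r \<in> sets nu" for z r using sN by simp
  have m1: "emeasure M (ball x 1) \<noteq> 0" using ball_pos[of 1 x] by simp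
  have m1t: "emeasure M (ball x 1) \<noteq> top" using ball_fin[of x 1] by simp
  have B1t: "B1 < top" unfolding B1_def using Lt by (simp add: ennreal_mult_less_top)
  have "B2 \<noteq> top" unfolding B2_def ennreal_divide_eq_top_iff using finN[of x r1] m1 m1t by auto
  then have B2t: "B2 < top" by (simp add: less_top)
  have B2eq: "B2 * emeasure M (ball x 1) = emeasure nu (ball x r1)"
    unfolding B2_def using m1 m1t
    by (metis ennreal_times_divide mult.commute mult_divide_eq_ennreal)
  have E0: "E \<ge> 0" "D \<ge> 0" unfolding E_def D_def by auto
  show ?thesis
  proof (intro exI[of _ "max B1 B2"] conjI allI impI)
    show "max B1 B2 < top" using B1t B2t by simp
    fix r :: real assume r: "r \<ge> 1"
    show "emeasure nu (ball x r) \<le> max B1 B2 * emeasure M (ball x r)"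
    proof (cases "r \<ge> r1")
      case True
      have "emeasure nu (ball x r) \<le> emeasure nu (ball x0 (r + D))"
        by (intro emeasure_mono) (auto simp: bN ball_subset_ball_iff D_def)
      also have "\<dots> \<le> L * emeasure M (ball x0 (r + D))" using r E0 by (intro Lb) simp
      also have "\<dots> \<le> L * emeasure M (ball y0 ((r - E) + real n))"
        using nE by (intro mult_left_mono emeasure_mono) (auto simp: bM ball_subset_ball_iff D_def E_def)
      also have "\<dots> \<le> L * (ennreal (c ^ n) * emeasure M (ball y0 (r - E)))"
        using True by (intro mult_left_mono iter) (auto simp: r1_def)
      also have "\<dots> \<le> L * (ennreal (c ^ n) * emeasure M (ball x r))"
      proof -
        have "dist y0 x \<le> E" unfolding E_def using dist_triangle[of y0 x x0]
          by (simp add: dist_commute)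
        then have "ball y0 (r - E) \<subseteq> ball x r" by (auto simp: ball_subset_ball_iff)
        then show ?thesis by (intro mult_left_mono emeasure_mono) (auto simp: bM)
      qed
      also have "\<dots> = B1 * emeasure M (ball x r)" unfolding B1_def by (simp add: mult.assoc)
      also have "\<dots> \<le> max B1 B2 * emeasure M (ball x r)" by (intro mult_right_mono) auto
      finally show ?thesis .
    next
      case False
      have "emeasure nu (ball x r) \<le> emeasure nu (ball x r1)"
        using False by (intro emeasure_mono) (auto simp: bN subset_ball)
      also have "\<dots> = B2 * emeasure M (ball x 1)" by (simp add: B2eq)
      also have "\<dots> \<le> B2 * emeasure M (ball x r)"
        using r by (intro mult_left_mono emeasure_mono) (auto simp: bM subset_ball)
      also have "\<dots> \<le> max B1 B2 * emeasure M (ball x r)" by (intro mult_right_mono) auto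
      finally show ?thesis .
    qed
  qed
qed



lemma ratio_le:
  fixes a b T :: ennreal
  assumes "a \<le> T * b" "b \<noteq> 0" "b < top"
  shows "a / b \<le> T"
proof -
  have "a / b \<le> T * b / b" by (rule divide_right_mono_ennreal[OF assms(1)])
  also have "\<dots> = T" using assms(2,3) by (simp add: mult_divide_eq_ennreal)
  finally show ?thesis .
qed

lemma le_of_ratio:
  fixes a b T :: ennreal
  assumes "a / b \<le> T" "b \<noteq> 0" "b < top"
  shows "a \<le> T * b"
proof -
  have "a = a / b * b" using assms(2,3)
    by (metis ennreal_times_divide mult.commute mult_divide_eq_ennreal less_top)
  also have "\<dots> \<le> T * b" by (rule mult_right_mono[OF assms(1)]) simp
  finally show ?thesis .
qed

theorem proposition6p3p1:
  fixes M :: "'a::euclidean_space measure" and y0 :: 'a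
  assumes borel: "sets M = sets borel"
    and ball_pos: "\<And>x r. r > 0 \<Longrightarrow> 0 < emeasure M (ball x r)"
    and ball_fin: "\<And>x r. emeasure M (ball x r) < \<infinity>"
    and growth: "Limsup (at_top :: real filter)
              (\<lambda>r. ereal (measure M (ball y0 (r + 1)) / measure M (ball y0 r))) < \<infinity>"
  shows "dichotomy_centered M"
  unfolding dichotomy_centered_def
proof
  fix f assume fL: "f \<in> L1_loc M"
  have fm: "f \<in> borel_measurable M" using fL unfolding L1_loc_def by blast
  have fint: "\<And>x r. (\<integral>\<^sup>+ y\<in>ball x r. ennreal \<bar>f y\<bar> \<partial>M) < \<infinity>"
    using fL unfolding L1_loc_def by blast
  define nu where "nu = density M (\<lambda>y. ennreal \<bar>f y\<bar>)"
  have sN: "sets nu = sets borel" unfolding nu_def using borel by simp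
  have gm: "(\<lambda>y. ennreal \<bar>f y\<bar>) \<in> borel_measurable M" using fm by measurable
  have bM: "ball z r \<in> sets M" for z r using borel by simp
  have nuball: "emeasure nu (ball x r) = (\<integral>\<^sup>+ y\<in>ball x r. ennreal \<bar>f y\<bar> \<partial>M)" for x r
    unfolding nu_def by (rule emeasure_density[OF gm bM])
  have finN: "emeasure nu (ball x r) < \<infinity>" for x r using fint nuball by simp
  have cm: "centered_max M f x = (SUP r\<in>{0<..}. emeasure nu (ball x r) / emeasure M (ball x r))" for x
    unfolding centered_max_def nuball ..
  have mpos: "emeasure M (ball x r) \<noteq> 0" if "r > 0" for x r using ball_pos[OF that, of x] by simp
  have mfin: "emeasure M (ball x r) < top" for x r using ball_fin[of x r] by simp
  show "emeasure M {x. centered_max M f x = \<infinity>} = 0 \<or> (\<forall>x. centered_max M f x = \<infinity>)"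
  proof (cases "\<forall>x. centered_max M f x = \<infinity>")
    case True then show ?thesis by blast
  next
    case False
    then obtain x0 where x0: "centered_max M f x0 \<noteq> \<infinity>" by blast
    define L where "L = centered_max M f x0"
    have Lt: "L < top" using x0 unfolding L_def by (simp add: less_top)
    have Lb: "emeasure nu (ball x0 r) \<le> L * emeasure M (ball x0 r)" if "r > 0" for r
    proof (rule le_of_ratio[OF _ mpos[OF that] mfin])
      show "emeasure nu (ball x0 r) / emeasure M (ball x0 r) \<le> L"
        unfolding L_def cm using that by (intro SUP_upper) auto
    qed
    obtain c s0 where cs: "c \<ge> 0" "s0 > 0"
      "\<And>n s. s \<ge> s0 \<Longrightarrow> emeasure M (ball y0 (s + real n)) \<le> ennreal (c ^ n) * emeasure M (ball y0 s)"
      using growth_iter[OF borel ball_pos ball_fin growth] by blast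
    have hyp: "\<exists>r. 0 < r \<and> r < 1 \<and> of_nat K * emeasure M (ball x r) < emeasure nu (ball x r)"
      if xZ: "x \<in> {x. centered_max M f x = \<infinity>}" for x K
    proof (rule ccontr)
      assume nr: "\<not> ?thesis"
      obtain B where B: "B < top" "\<And>r. r \<ge> 1 \<Longrightarrow> emeasure nu (ball x r) \<le> B * emeasure M (ball x r)"
        using large_scale[OF borel sN ball_pos ball_fin finN cs(1,2) cs(3) Lb Lt, of x] by blast
      define T where "T = max (of_nat K) B"
      have "centered_max M f x \<le> T" unfolding cm
      proof (rule SUP_least)
        fix r :: real assume "r \<in> {0<..}"
        then have r: "r > 0" by simp
        have "emeasure nu (ball x r) \<le> T * emeasure M (ball x r)"
        proof (cases "r < 1")
          case True
          then have "emeasure nu (ball x r) \<le> of_nat K * emeasure M (ball x r)" using nr r by auto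
          also have "\<dots> \<le> T * emeasure M (ball x r)" unfolding T_def by (intro mult_right_mono) auto
          finally show ?thesis .
        next
          case False
          then have "emeasure nu (ball x r) \<le> B * emeasure M (ball x r)" using B(2) by simp
          also have "\<dots> \<le> T * emeasure M (ball x r)" unfolding T_def by (intro mult_right_mono) auto
          finally show ?thesis .
        qed
        then show "emeasure nu (ball x r) / emeasure M (ball x r) \<le> T"
          by (rule ratio_le[OF _ mpos[OF r] mfin])
      qed
      moreover have "T < top" unfolding T_def using B(1) by (simp add: of_nat_less_top)
      ultimately show False using xZ by (simp add: top_unique)
    qed
    obtain W where W: "W \<in> null_sets M" "{x. centered_max M f x = \<infinity>} \<subseteq> W"
      using null_superset[OF borel sN finN hyp] by blast
    have "emeasure M {x. centered_max M f x = \<infinity>} \<le> emeasure M W"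
      using W by (intro emeasure_mono) auto
    then show ?thesis using null_setsD1[OF W(1)] by simp
  qed
qed

end
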